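(* Let $n\ge3$, and let $R$ and $S$ be filtered $\lambda$-ring structures on $\mathbf{Z}[x]/(x^n)$ and $\sigma\colon R\to S$ any filtered $\lambda$-ring isomorphism. Write $\sigma(x)=\sum_{k=1}^{n-1}b_kx^k$, regard this as a polynomial in $\mathbf{Z}[x]/(x^{n+1})$, and let $\sigma^{-1}(x)$ be its compositional inverse in $\mathbf{Z}[x]/(x^{n+1})$. Let $\tilde R$ be a filtered $\lambda$-ring structure on $\mathbf{Z}[x]/(x^{n+1})$ with $\psi^p_{\tilde R}(x)\equiv\psi^p_R(x)\pmod{x^n}$ for all primes $p$, and define for each prime $p$ \[\psi^p_{\tilde S}(x)=\sigma^{-1}\bigl(\psi^p_{\tilde R}(\sigma(x))\bigr)\in\mathbf{Z}[x]/(x^{n+1}).\] Then $\psi^p_{\tilde S}(x)\equiv x^p\pmod p$ for all primes $p\ge n$.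
   Context: A (special) $\lambda$-ring is a commutative ring with operations $\lambda^i$ satisfying the Atiyah–Tall axioms; a filtered $\lambda$-ring is a $\lambda$-ring with decreasing filtration by ideals closed under $\lambda^i$, $i\ge1$; morphisms are filtration-preserving $\lambda$-ring maps. $\mathbf{Z}[x]/(x^m)$ is filtered with $x$ in a fixed positive filtration $d$ ($I^k$ generated by the $x^j$ with $jd\ge k$). A filtered $\lambda$-ring structure is determined by the polynomials $\psi^p(x)$ (Adams operations on $x$), $p$ prime; a filtered ring automorphism $\sigma$ is a filtered $\lambda$-ring isomorphism $R\to S$ iff $\psi^p_R(\sigma(x))=\sigma(\psi^p_S(x))$ as polynomials for all primes $p$ (here $f(g(x))$ denotes composition of polynomials). *)

theory Defs
  imports "HOL-Computational_Algebra.Polynomial" "HOL-Computational_Algebra.Primes"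
begin

text \<open>Elements of Z[x]/(x^m) are represented by integer polynomials of degree < m.\<close>

definition tcarrier :: "nat \<Rightarrow> int poly set" where
  "tcarrier m = {a. \<forall>i\<ge>m. coeff a i = 0}"

definition trunc :: "nat \<Rightarrow> int poly \<Rightarrow> int poly" where
  "trunc m a = (\<Sum>i<m. monom (coeff a i) i)"

abbreviation X :: "int poly" where "X \<equiv> [:0, 1:]"

text \<open>Filtration with x in filtration d: I^k is generated by the x^j with j*d \<ge> k.\<close>
definition filt :: "nat \<Rightarrow> nat \<Rightarrow> nat \<Rightarrow> int poly set" where
  "filt m d k = {a \<in> tcarrier m. \<forall>j. j * d < k \<longrightarrow> coeff a j = 0}"

text \<open>Adams operations of a family of lambda-operations L, by Newton's formula
  psi^n = sum_{i=1}^{n-1} (-1)^(i+1) lambda^i psi^(n-i) + (-1)^(n+1) n lambda^n.\<close>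
function adams :: "nat \<Rightarrow> (nat \<Rightarrow> int poly \<Rightarrow> int poly) \<Rightarrow> nat \<Rightarrow> int poly \<Rightarrow> int poly" where
  "adams m L n a =
     (if n = 0 then 0 else
      trunc m ((\<Sum>i\<in>{1..<n}. smult ((-1) ^ (i + 1)) (L i a * adams m L (n - i) a))
               + smult ((-1) ^ (n + 1) * int n) (L n a)))"
  by pat_completeness auto
termination
  by (relation "measure (\<lambda>(m, L, n, a). n)") auto

text \<open>(Special) lambda-ring structure on the torsion-free ring Z[x]/(x^m), given by its
  lambda-operations L i.  Pre-lambda-ring axioms, lambda_t(1) = 1 + t, and (equivalent for
  torsion-free rings to the Atiyah--Tall axioms) the Adams operations are ring
  endomorphisms with psi^n psi^k = psi^(nk).\<close>
definition lambda_ring :: "nat \<Rightarrow> (nat \<Rightarrow> int poly \<Rightarrow> int poly) \<Rightarrow> bool" where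
  "lambda_ring m L \<longleftrightarrow>
     (\<forall>i. \<forall>a\<in>tcarrier m. L i a \<in> tcarrier m) \<and>
     (\<forall>a\<in>tcarrier m. L 0 a = 1 \<and> L 1 a = a) \<and>
     (\<forall>n. \<forall>a\<in>tcarrier m. \<forall>b\<in>tcarrier m.
        L n (a + b) = trunc m (\<Sum>i\<le>n. L i a * L (n - i) b)) \<and>
     (\<forall>n\<ge>2. L n 1 = 0) \<and>
     (\<forall>n\<ge>1. adams m L n 1 = 1 \<and>
        (\<forall>a\<in>tcarrier m. \<forall>b\<in>tcarrier m.
           adams m L n (a + b) = adams m L n a + adams m L n b \<and>
           adams m L n (trunc m (a * b)) = trunc m (adams m L n a * adams m L n b))) \<and>
     (\<forall>n\<ge>1. \<forall>k\<ge>1. \<forall>a\<in>tcarrier m. adams m L n (adams m L k a) = adams m L (n * k) a)"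

definition filtered_lambda_ring :: "nat \<Rightarrow> nat \<Rightarrow> (nat \<Rightarrow> int poly \<Rightarrow> int poly) \<Rightarrow> bool" where
  "filtered_lambda_ring m d L \<longleftrightarrow> lambda_ring m L \<and>
     (\<forall>k i a. 1 \<le> i \<longrightarrow> a \<in> filt m d k \<longrightarrow> L i a \<in> filt m d k)"

definition filtered_lambda_iso ::
  "nat \<Rightarrow> nat \<Rightarrow> (nat \<Rightarrow> int poly \<Rightarrow> int poly) \<Rightarrow> (nat \<Rightarrow> int poly \<Rightarrow> int poly)
     \<Rightarrow> (int poly \<Rightarrow> int poly) \<Rightarrow> bool" where
  "filtered_lambda_iso m d L1 L2 \<sigma> \<longleftrightarrow>
     bij_betw \<sigma> (tcarrier m) (tcarrier m) \<and>
     \<sigma> 1 = 1 \<and>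
     (\<forall>a\<in>tcarrier m. \<forall>b\<in>tcarrier m.
        \<sigma> (a + b) = \<sigma> a + \<sigma> b \<and> \<sigma> (trunc m (a * b)) = trunc m (\<sigma> a * \<sigma> b)) \<and>
     (\<forall>i. \<forall>a\<in>tcarrier m. \<sigma> (L1 i a) = L2 i (\<sigma> a)) \<and>
     (\<forall>k. \<sigma> ` filt m d k \<subseteq> filt m d k) \<and>
     (\<forall>k. \<forall>a\<in>tcarrier m. \<sigma> a \<in> filt m d k \<longrightarrow> a \<in> filt m d k)"

end

theory Submission
  imports Defs
begin


function psi :: "(nat \<Rightarrow> int poly) \<Rightarrow> nat \<Rightarrow> int poly" where
  "psi E n =
     (if n = 0 then 0 else
      (\<Sum>i\<in>{1..<n}. smult ((-1) ^ (i + 1)) (E i * psi E (n - i)))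
               + smult ((-1) ^ (n + 1) * int n) (E n))"
  by pat_completeness auto
termination
  by (relation "measure (\<lambda>(E, n). n)") auto

declare psi.simps[simp del]
declare adams.simps[simp del]

lemma coeff_trunc: "coeff (trunc m a) j = (if j < m then coeff a j else 0)"
  unfolding trunc_def by (simp add: coeff_sum coeff_monom)

lemma trunc_eqI: "(\<And>j. j < m \<Longrightarrow> coeff a j = coeff b j) \<Longrightarrow> trunc m a = trunc m b"
  by (rule poly_eqI) (simp add: coeff_trunc)

lemma trunc_mult_trunc: "trunc m (a * trunc m b) = trunc m (a * b)"
proof (rule trunc_eqI)
  fix j assume "j < m"
  then show "coeff (a * trunc m b) j = coeff (a * b) j"
    by (auto simp: coeff_mult coeff_trunc intro!: sum.cong)
qed

lemma adams_psi: "adams m L k a = trunc m (psi (\<lambda>i. L i a) k)"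
proof (induction k rule: less_induct)
  case (less k)
  show ?case
  proof (cases "k = 0")
    case True
    then show ?thesis by (simp add: adams.simps psi.simps trunc_def)
  next
    case False
    have "adams m L k a = trunc m ((\<Sum>i\<in>{1..<k}. smult ((-1) ^ (i + 1)) (L i a * adams m L (k - i) a))
               + smult ((-1) ^ (k + 1) * int k) (L k a))"
      using False by (subst adams.simps) simp
    also have "\<dots> = trunc m ((\<Sum>i\<in>{1..<k}. smult ((-1) ^ (i + 1)) (L i a * psi (\<lambda>i. L i a) (k - i)))
               + smult ((-1) ^ (k + 1) * int k) (L k a))"
    proof (rule trunc_eqI)
      fix j assume j: "j < m"
      have "coeff (L i a * adams m L (k - i) a) j = coeff (L i a * psi (\<lambda>i. L i a) (k - i)) j"
        if "i \<in> {1..<k}" for i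
      proof -
        have "adams m L (k - i) a = trunc m (psi (\<lambda>i. L i a) (k - i))"
          using that by (intro less) auto
        then show ?thesis using j by (auto simp: coeff_mult coeff_trunc intro!: sum.cong)
      qed
      then show "coeff ((\<Sum>i\<in>{1..<k}. smult ((-1) ^ (i + 1)) (L i a * adams m L (k - i) a))
               + smult ((-1) ^ (k + 1) * int k) (L k a)) j =
        coeff ((\<Sum>i\<in>{1..<k}. smult ((-1) ^ (i + 1)) (L i a * psi (\<lambda>i. L i a) (k - i)))
               + smult ((-1) ^ (k + 1) * int k) (L k a)) j"
        by (simp add: coeff_sum)
    qed
    also have "\<dots> = trunc m (psi (\<lambda>i. L i a) k)"
      using False by (subst (2) psi.simps) simp
    finally show ?thesis .
  qed
qed



lemma psi_0[simp]: "psi E 0 = 0" by (simp add: psi.simps)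

lemma of_nat_dvd_of_nat_poly: "(m::nat) dvd k \<Longrightarrow> (of_nat m :: 'a::comm_semiring_1) dvd of_nat k"
  by (metis dvd_def of_nat_mult)

lemma newton_coeff:
  fixes E :: "nat \<Rightarrow> int poly" and f :: "nat \<Rightarrow> int poly"
  assumes f: "\<And>i. f i = (if i = 0 then 1 else smult ((-1)^i) (E i))"
    and n: "n \<ge> 1"
  shows "(\<Sum>i\<le>n. f i * psi E (n - i)) + of_nat n * f n = 0"
proof -
  obtain m where m: "n = Suc m" using n by (cases n) auto
  have s1: "(\<Sum>i\<le>n. f i * psi E (n - i)) = psi E n + (\<Sum>i<m. f (Suc i) * psi E (n - Suc i))"
  proof -
    have "(\<Sum>i\<le>n. f i * psi E (n - i)) = (\<Sum>i\<le>m. f i * psi E (n - i))"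
      unfolding m by (simp add: sum.atMost_Suc)
    also have "\<dots> = f 0 * psi E n + (\<Sum>i<m. f (Suc i) * psi E (n - Suc i))"
      by (simp add: sum.atMost_shift)
    finally show ?thesis by (simp add: f)
  qed
  have s2: "(\<Sum>i\<in>{1..<n}. smult ((-1) ^ (i + 1)) (E i * psi E (n - i)))
      = (\<Sum>i<m. smult ((-1) ^ (Suc i + 1)) (E (Suc i) * psi E (n - Suc i)))"
    unfolding m One_nat_def sum.shift_bounds_Suc_ivl atLeast0LessThan by (rule sum.cong) auto
  have pn: "psi E n = (\<Sum>i\<in>{1..<n}. smult ((-1) ^ (i + 1)) (E i * psi E (n - i)))
               + smult ((-1) ^ (n + 1) * int n) (E n)"
    using n by (subst psi.simps) simp
  have "(\<Sum>i<m. f (Suc i) * psi E (n - Suc i)) = - (\<Sum>i<m. smult ((-1) ^ (Suc i + 1)) (E (Suc i) * psi E (n - Suc i)))"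
    by (simp add: f sum_negf[symmetric] mult_smult_left)
  moreover have "of_nat n * f n = - smult ((-1) ^ (n + 1) * int n) (E n)"
    using n by (simp add: f of_nat_poly)
  ultimately show ?thesis using s1 s2 pn by simp
qed



lemma core:
  fixes E :: "nat \<Rightarrow> int poly"
  assumes p: "prime p" and odd: "odd p"
  shows "(of_nat p :: int poly) dvd (psi E p - E 1 ^ p)"
proof -
  define D :: "int poly" where "D = of_nat p"
  have p1: "p \<ge> 2" using p prime_ge_2_nat by blast
  define f :: "nat \<Rightarrow> int poly" where "f i = (if i = 0 then 1 else smult ((-1)^i) (E i))" for i
  define F :: "int poly poly" where "F = (\<Sum>i\<le>p. monom (f i) i)"
  define Q :: "int poly poly" where "Q = (\<Sum>i\<le>p. monom (psi E i) i)"
  have cF: "coeff F i = f i" if "i \<le> p" for i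
    using that by (simp add: F_def coeff_sum coeff_monom)
  have cQ: "coeff Q i = psi E i" if "i \<le> p" for i
    using that by (simp add: Q_def coeff_sum coeff_monom)
  have newton: "coeff (F * Q + monom 1 1 * pderiv F) n = 0" if "n \<le> p" for n
  proof (cases "n = 0")
    case True
    then show ?thesis by (simp add: coeff_mult coeff_monom_mult cQ)
  next
    case False
    have "coeff (F * Q) n = (\<Sum>i\<le>n. f i * psi E (n - i))"
      using that by (auto simp: coeff_mult cF cQ intro!: sum.cong)
    moreover have "coeff (monom 1 1 * pderiv F) n = of_nat n * f n"
      using that False by (simp add: coeff_monom_mult coeff_pderiv cF)
    ultimately show ?thesis using newton_coeff[OF f_def, of n] False by simp
  qed
  have key: "coeff (F^(p-1) * (F * Q + monom 1 1 * pderiv F)) p = 0"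
    by (subst coeff_mult, rule sum.neutral) (metis diff_le_self mult_zero_right newton)
  have eq1: "F^(p-1) * (F * Q + monom 1 1 * pderiv F) = F^p * Q + monom 1 1 * (F^(p-1) * pderiv F)"
  proof -
    have "F^p = F^(p-1) * F" using p1 by (metis Suc_diff_1 less_le_trans pos2 power_Suc2)
    then show ?thesis by (simp add: algebra_simps)
  qed
  have der: "coeff (F^(p-1) * pderiv F) (p-1) = coeff (F^p) p"
  proof -
    have "pderiv (F^(Suc (p-1))) = smult (of_nat (Suc (p-1))) (F^(p-1)) * pderiv F"
      by (rule pderiv_power_Suc)
    then have "pderiv (F^p) = smult (of_nat p) (F^(p-1) * pderiv F)"
      using p1 by simp
    then have "coeff (pderiv (F^p)) (p-1) = coeff (smult (of_nat p) (F^(p-1) * pderiv F)) (p-1)"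
      by simp
    then have "of_nat p * coeff (F^p) p = of_nat p * coeff (F^(p-1) * pderiv F) (p-1)"
      using p1 by (simp add: coeff_pderiv)
    moreover have "(of_nat p :: int poly) \<noteq> 0" using p1 by (simp add: of_nat_poly)
    ultimately show ?thesis by simp
  qed
  have star: "coeff (F^p * Q) p = - coeff (F^p) p"
    using key der unfolding eq1 using p1 by (simp add: coeff_monom_mult)
  define G where "G = F - 1"
  have G0: "coeff G 0 = 0" using p1 by (simp add: G_def cF f_def)
  then obtain H where GH: "G = monom 1 1 * H"
    using monom_1_dvd_iff'[of 1 G] by (auto elim!: dvdE)
  have H0: "coeff H 0 = - E 1"
  proof -
    have "coeff G 1 = coeff H 0" using GH by (simp add: coeff_monom_mult)
    moreover have "coeff G 1 = f 1" using p1 by (simp add: G_def cF)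
    ultimately show ?thesis by (simp add: f_def)
  qed
  have cGk: "coeff (G^k) i = (if i < k then 0 else coeff (H^k) (i - k))" for k i
    by (simp add: GH power_mult_distrib monom_power coeff_monom_mult)
  have FG: "F = G + 1" by (simp add: G_def)
  have cFp: "coeff (F^p) i = (\<Sum>k\<le>p. of_nat (p choose k) * coeff (G^k) i)" for i
    unfolding FG binomial_ring by (simp add: coeff_sum of_nat_poly)
  have dv: "D dvd (coeff (F^p) i - (if i = 0 then 1 else 0) - coeff (G^p) i)" for i
  proof -
    have "{..p} = insert 0 (insert p {1..<p})" using p1 by auto
    then have "coeff (F^p) i = of_nat (p choose 0) * coeff (G^0) i + (of_nat (p choose p) * coeff (G^p) i +
        (\<Sum>k\<in>{1..<p}. of_nat (p choose k) * coeff (G^k) i))"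
      unfolding cFp using p1 by (simp add: sum.insert)
    moreover have "D dvd (\<Sum>k\<in>{1..<p}. of_nat (p choose k) * coeff (G^k) i)"
    proof (rule dvd_sum)
      fix k assume "k \<in> {1..<p}"
      then have "p dvd (p choose k)" using p p1 by (intro dvd_choose_prime) auto
      then show "D dvd of_nat (p choose k) * coeff (G^k) i"
        unfolding D_def by (intro dvd_mult2 of_nat_dvd_of_nat_poly)
    qed
    ultimately show ?thesis by (cases "i = 0") (simp_all add: coeff_1)
  qed
  have cF0: "coeff (F^p) 0 = 1" by (simp add: coeff_0_power cF f_def)
  have dvi: "D dvd coeff (F^p) i" if "0 < i" "i < p" for i
    using dv[of i] that by (simp add: cGk)
  have cFpp: "D dvd (coeff (F^p) p - (- E 1)^p)"
    using dv[of p] p1 by (simp add: cGk coeff_0_power H0)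
  have "coeff (F^p * Q) p = (\<Sum>i\<le>p. coeff (F^p) i * psi E (p - i))"
    by (auto simp: coeff_mult cQ intro!: sum.cong)
  also have "\<dots> = psi E p + (\<Sum>i\<in>{1..<p}. coeff (F^p) i * psi E (p - i))"
  proof -
    have "{..p} = insert 0 (insert p {1..<p})" using p1 by auto
    then show ?thesis using p1 by (simp add: sum.insert cF0)
  qed
  finally have e2: "coeff (F^p * Q) p = psi E p + (\<Sum>i\<in>{1..<p}. coeff (F^p) i * psi E (p - i))" .
  have "D dvd (\<Sum>i\<in>{1..<p}. coeff (F^p) i * psi E (p - i))"
  proof (rule dvd_sum)
    fix i assume "i \<in> {1..<p}"
    then have "0 < i" "i < p" by auto
    then show "D dvd coeff (F^p) i * psi E (p - i)" by (intro dvd_mult2 dvi)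
  qed
  then have "D dvd (psi E p + coeff (F^p) p)"
  proof -
    have "psi E p + coeff (F^p) p = - (\<Sum>i\<in>{1..<p}. coeff (F^p) i * psi E (p - i))"
      using e2 star by (simp add: eq_neg_iff_add_eq_0 algebra_simps)
    then show ?thesis using \<open>D dvd (\<Sum>i\<in>{1..<p}. coeff (F^p) i * psi E (p - i))\<close> by simp
  qed
  then have "D dvd ((psi E p + coeff (F^p) p) - (coeff (F^p) p - (- E 1)^p))"
    using cFpp by (rule dvd_diff)
  moreover have "(- E 1)^p = - (E 1 ^ p)" using odd by simp
  ultimately show ?thesis unfolding D_def by simp
qed



lemma pcompose_cong_dvd:
  fixes D :: "int poly"
  assumes "D dvd (x - y)"
  shows "D dvd (pcompose q x - pcompose q y)"
proof (induction q)
  case (pCons a q)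
  have "pcompose (pCons a q) x - pcompose (pCons a q) y
      = x * (pcompose q x - pcompose q y) + (x - y) * pcompose q y"
    by (simp add: pcompose_pCons algebra_simps)
  then show ?case using pCons.IH assms by simp
qed simp

lemma pcompose_X_power: "pcompose ([:0, 1:] ^ k) s = s ^ k"
  by (induction k) (simp_all add: pcompose_mult pcompose_1 pcompose_pCons)

lemma coeff_pcompose_low:
  fixes q w :: "int poly"
  assumes q0: "coeff q 0 = 0" and w: "\<forall>i<k. coeff w i = 0" and j: "j < 2 * k"
  shows "coeff (pcompose q w) j = coeff q 1 * coeff w j"
proof -
  obtain a v where qv: "q = pCons a v" by (cases q)
  obtain c v' where vv: "v = pCons c v'" by (cases v)
  have a: "a = 0" using q0 qv by simp
  obtain g where g: "w = monom 1 k * g" using w monom_1_dvd_iff'[of k w] by (auto elim!: dvdE)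
  have "pcompose q w = smult c w + monom 1 (k + k) * (g * g * pcompose v' w)"
    using a by (simp add: qv vv pcompose_pCons g algebra_simps mult_monom)
  then show ?thesis using j by (simp add: coeff_monom_mult qv vv)
qed

lemma dvd_const_coeff: "[:c:] dvd a \<Longrightarrow> c dvd coeff a j"
  by (auto elim!: dvdE)

lemma trunc_diff: "trunc m (a - b) = trunc m a - trunc m b"
  by (rule poly_eqI) (simp add: coeff_trunc)

lemma trunc_const_mult: "trunc m ([:c:] * a) = [:c:] * trunc m a"
  by (rule poly_eqI) (simp add: coeff_trunc)



lemma trunc_smult: "trunc m (smult c a) = smult c (trunc m a)"
  by (rule poly_eqI) (simp add: coeff_trunc)

lemma trunc_add: "trunc m (a + b) = trunc m a + trunc m b"
  by (rule poly_eqI) (simp add: coeff_trunc)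

theorem theorem1p9:
  fixes n d :: nat
    and LR LS LRt :: "nat \<Rightarrow> int poly \<Rightarrow> int poly"
    and \<sigma> :: "int poly \<Rightarrow> int poly"
    and sinv :: "int poly"
  assumes "n \<ge> 3" and "d > 0"
    and "filtered_lambda_ring n d LR"
    and "filtered_lambda_ring n d LS"
    and "filtered_lambda_iso n d LR LS \<sigma>"
    and "sinv \<in> tcarrier (n + 1)" and "coeff sinv 0 = 0"
    and "trunc (n + 1) (pcompose (\<sigma> X) sinv) = X"
    and "trunc (n + 1) (pcompose sinv (\<sigma> X)) = X"
    and "filtered_lambda_ring (n + 1) d LRt"
    and "\<forall>p. prime p \<longrightarrow> trunc n (adams (n + 1) LRt p X) = adams n LR p X"
  shows "\<forall>p. prime p \<and> p \<ge> n \<longrightarrow>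
           (\<forall>j. int p dvd coeff (trunc (n + 1) (pcompose sinv (pcompose (adams (n + 1) LRt p X) (\<sigma> X)))
                                 - trunc (n + 1) (monom 1 p)) j)"
proof (intro allI impI, elim conjE)
  fix p j :: nat
  assume p: "prime p" and pn: "p \<ge> n"
  note n3 = assms(1) and d0 = assms(2) and iso = assms(5) and sv0 = assms(7)
    and inv2 = assms(9) and Rt = assms(10)
  define s where "s = \<sigma> X"
  define D :: "int poly" where "D = [:int p:]"
  have odd: "odd p" using p pn n3
    by (intro prime_odd_nat) auto
  have Xf: "X \<in> filt n d d"
    using n3 d0 by (auto simp: filt_def tcarrier_def coeff_pCons split: nat.splits)
  have "s \<in> filt n d d" using iso Xf unfolding filtered_lambda_iso_def s_def by blast
  then have s0: "coeff s 0 = 0" using d0 by (simp add: filt_def)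
  define E where "E i = LRt i X" for i
  have XT: "X \<in> tcarrier (n + 1)" using n3 by (auto simp: tcarrier_def coeff_pCons split: nat.splits)
  have E1: "E 1 = X" using Rt XT
    unfolding E_def filtered_lambda_ring_def lambda_ring_def by blast
  have "(of_nat p :: int poly) dvd (psi E p - X ^ p)" using core[OF p odd, of E] E1 by simp
  then obtain r where r: "psi E p = X ^ p + D * r"
    by (auto simp: D_def of_nat_poly elim!: dvdE simp: algebra_simps)
  define P where "P = adams (n + 1) LRt p X"
  define T where "T = trunc (n + 1) (X ^ p)"
  have "P = trunc (n + 1) (psi E p)" unfolding P_def E_def by (rule adams_psi)
  then have "P - T = D * trunc (n + 1) r"
    unfolding T_def r D_def by (simp add: trunc_smult trunc_add)
  then have "D dvd (pcompose P s - pcompose T s)"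
    by (intro dvdI[of _ _ "pcompose (trunc (n + 1) r) s"]) (simp add: pcompose_diff[symmetric] pcompose_smult D_def)
  then have cong: "D dvd (pcompose sinv (pcompose P s) - pcompose sinv (pcompose T s))"
    by (rule pcompose_cong_dvd)
  have main: "int p dvd (coeff (pcompose sinv (pcompose T s)) j - coeff (monom 1 p) j)" if j: "j \<le> n" for j
  proof (cases "p = n")
    case False
    then have "p > n" using pn by simp
    then have "T = 0" unfolding T_def
      by (intro poly_eqI) (simp add: coeff_trunc monom_altdef[of 1, simplified, symmetric] coeff_monom)
    then show ?thesis using j \<open>p > n\<close> sv0 by (simp add: pcompose_0' coeff_monom)
  next
    case True
    have "T = X ^ n" unfolding T_def True
      by (intro poly_eqI) (simp add: coeff_trunc monom_altdef[of 1, simplified, symmetric] coeff_monom)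
    then have T: "pcompose T s = s ^ n" by (simp add: pcompose_X_power)
    obtain h where h: "s = monom 1 1 * h" using s0 monom_1_dvd_iff'[of 1 s] by (auto elim!: dvdE)
    have b1: "coeff s 1 = coeff h 0" using h by (simp add: coeff_monom_mult)
    have cu: "coeff (s ^ n) i = (if i < n then 0 else coeff (h ^ n) (i - n))" for i
      by (simp add: h power_mult_distrib monom_power coeff_monom_mult)
    have low: "coeff (pcompose sinv (s ^ n)) j = coeff sinv 1 * coeff (s ^ n) j"
      using j n3 by (intro coeff_pcompose_low[OF sv0]) (auto simp: cu)
    have "coeff (trunc (n + 1) (pcompose sinv s)) 1 = 1" using inv2 by (simp add: s_def)
    then have "coeff (pcompose sinv s) 1 = 1" using n3 by (simp add: coeff_trunc)
    moreover have "coeff (pcompose sinv s) 1 = coeff sinv 1 * coeff s 1"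
      by (intro coeff_pcompose_low[OF sv0, of 1]) (auto simp: s0)
    ultimately have cb: "coeff sinv 1 * coeff h 0 = 1" using b1 by simp
    have oddn: "odd n" using odd True by simp
    have "coeff sinv 1 * coeff h 0 ^ n = 1"
      using cb oddn unfolding zmult_eq_1_iff by auto
    then show ?thesis using j True
      by (auto simp: T low cu coeff_monom coeff_0_power)
  qed
  show "int p dvd coeff (trunc (n + 1) (pcompose sinv (pcompose P s)) - trunc (n + 1) (monom 1 p)) j"
  proof (cases "j < n + 1")
    case True
    have "int p dvd coeff (pcompose sinv (pcompose P s) - pcompose sinv (pcompose T s)) j"
      using cong unfolding D_def by (rule dvd_const_coeff)
    then have "int p dvd (coeff (pcompose sinv (pcompose P s) - pcompose sinv (pcompose T s)) j
       + (coeff (pcompose sinv (pcompose T s)) j - coeff (monom 1 p) j))"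
      using main[of j] True by (intro dvd_add) auto
    moreover have "coeff (pcompose sinv (pcompose P s) - pcompose sinv (pcompose T s)) j
       + (coeff (pcompose sinv (pcompose T s)) j - coeff (monom 1 p) j)
      = coeff (trunc (n + 1) (pcompose sinv (pcompose P s)) - trunc (n + 1) (monom 1 p)) j"
      using True by (simp add: coeff_trunc)
    ultimately show ?thesis by simp
  qed (simp add: coeff_trunc)
qed


end
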